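(* The class of chain graphs is degree sandwich monotone; that is, for every chain graph $G$ and every set $F\subseteq E(G)$ such that $G-F$ is a chain graph, every degree-minimal edge $e$ in $F$ satisfies that $G-e$ is a chain graph.
   Context: A chain graph is a bipartite graph whose vertex set can be partitioned into two independent sets $X,Y$ such that the neighborhoods of the vertices of $X$ are linearly ordered by inclusion. Given a graph $G$ and $F\subseteq E(G)$, an edge $e\in F$ is degree-minimal in $F$ if its endpoints can be named $u,v$ so that (i) $u$ has the smallest degree in $G$ among all vertices incident to an edge of $F$, and (ii) $v$ has the smallest degree in $G$ among all vertices $w$ with $uw\in F$. *)

theory Defs
  imports Main
begin

definition graph :: "'a set \<Rightarrow> 'a set set \<Rightarrow> bool" where
  "graph V E \<longleftrightarrow> finite V \<and> (\<forall>e\<in>E. e \<subseteq> V \<and> card e = 2)"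

definition nbhd :: "'a set set \<Rightarrow> 'a \<Rightarrow> 'a set" where
  "nbhd E v = {w. {v, w} \<in> E}"

definition degree :: "'a set set \<Rightarrow> 'a \<Rightarrow> nat" where
  "degree E v = card (nbhd E v)"

definition independent :: "'a set set \<Rightarrow> 'a set \<Rightarrow> bool" where
  "independent E S \<longleftrightarrow> (\<forall>e\<in>E. \<not> e \<subseteq> S)"

definition chain_graph :: "'a set \<Rightarrow> 'a set set \<Rightarrow> bool" where
  "chain_graph V E \<longleftrightarrow> graph V E \<and>
     (\<exists>X Y. X \<union> Y = V \<and> X \<inter> Y = {} \<and> independent E X \<and> independent E Y \<and>
        (\<forall>x1\<in>X. \<forall>x2\<in>X. nbhd E x1 \<subseteq> nbhd E x2 \<or> nbhd E x2 \<subseteq> nbhd E x1))"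

definition degree_minimal :: "'a set set \<Rightarrow> 'a set set \<Rightarrow> 'a set \<Rightarrow> bool" where
  "degree_minimal E F e \<longleftrightarrow> e \<in> F \<and>
     (\<exists>u v. e = {u, v} \<and>
        (\<forall>f\<in>F. \<forall>w\<in>f. degree E u \<le> degree E w) \<and>
        (\<forall>w. {u, w} \<in> F \<longrightarrow> degree E v \<le> degree E w))"

end

theory Submission
  imports Defs
begin

lemma edge_sides:
  assumes "graph V E" "X \<union> Y = V" "X \<inter> Y = {}" "independent E X" "independent E Y"
    and "{x, y} \<in> E"
  shows "(x \<in> X \<and> y \<in> Y) \<or> (x \<in> Y \<and> y \<in> X)"
proof -
  have "{x,y} \<subseteq> V" using assms unfolding graph_def by blast
  moreover have "\<not> {x,y} \<subseteq> X" "\<not> {x,y} \<subseteq> Y" using assms(4,5,6) unfolding independent_def by blast+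
  ultimately show ?thesis using assms(2,3) by blast
qed

lemma twoK2:
  assumes "chain_graph V E" "{a,b} \<in> E" "{c,d} \<in> E" "{a,d} \<notin> E" "{b,c} \<notin> E"
    "{a,c} \<notin> E" "{b,d} \<notin> E"
  shows False
proof -
  obtain X Y where g: "graph V E" and XY: "X \<union> Y = V" "X \<inter> Y = {}" "independent E X" "independent E Y"
    and nest: "\<forall>x1\<in>X. \<forall>x2\<in>X. nbhd E x1 \<subseteq> nbhd E x2 \<or> nbhd E x2 \<subseteq> nbhd E x1"
    using assms(1) unfolding chain_graph_def by blast
  have s1: "(a \<in> X \<and> b \<in> Y) \<or> (a \<in> Y \<and> b \<in> X)" using edge_sides[OF g XY assms(2)] .
  have s2: "(c \<in> X \<and> d \<in> Y) \<or> (c \<in> Y \<and> d \<in> X)" using edge_sides[OF g XY assms(3)] .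
  have ins: "\<And>p q. {p,q} = {q,p}" by (simp add: insert_commute)
  have ad: "{d,a} \<notin> E" "{c,b} \<notin> E" "{c,a} \<notin> E" "{d,b} \<notin> E" using assms(4-7) ins by metis+
  have ba: "{b,a} \<in> E" "{d,c} \<in> E" using assms(2,3) ins by metis+
  from s1 s2 show False
  proof (elim disjE conjE)
    assume "a \<in> X" "c \<in> X"
    then show False using nest assms ad unfolding nbhd_def by blast
  next
    assume "a \<in> X" "d \<in> X"
    then show False using nest assms ad ba unfolding nbhd_def by blast
  next
    assume "b \<in> X" "c \<in> X"
    then show False using nest assms ad ba unfolding nbhd_def by blast
  next
    assume "b \<in> X" "d \<in> X"
    then show False using nest assms ad ba unfolding nbhd_def by blast
  qed
qed

lemma nest_deg:
  assumes "chain_graph V E" "{c,d} \<in> E" "{a,d} \<notin> E" "{a,b} \<in> E" "{b,c} \<in> E" "{a,c} \<notin> E"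
  shows "degree E a < degree E c"
proof -
  obtain X Y where g: "graph V E" and XY: "X \<union> Y = V" "X \<inter> Y = {}" "independent E X" "independent E Y"
    using assms(1) unfolding chain_graph_def by blast
  have ins: "\<And>p q. {p,q} = {q,p}" by (simp add: insert_commute)
  have sub: "nbhd E a \<subseteq> nbhd E c"
  proof
    fix w assume w: "w \<in> nbhd E a"
    hence aw: "{a,w} \<in> E" unfolding nbhd_def by simp
    show "w \<in> nbhd E c"
    proof (rule ccontr)
      assume "w \<notin> nbhd E c"
      hence cw: "{w,c} \<notin> E" unfolding nbhd_def by (simp add: insert_commute)
      have wd: "{w,d} \<notin> E"
      proof
        assume wd: "{w,d} \<in> E"
        have "(a \<in> X \<and> w \<in> Y) \<or> (a \<in> Y \<and> w \<in> X)" using edge_sides[OF g XY aw] .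
        moreover have "(a \<in> X \<and> b \<in> Y) \<or> (a \<in> Y \<and> b \<in> X)" using edge_sides[OF g XY assms(4)] .
        moreover have "(b \<in> X \<and> c \<in> Y) \<or> (b \<in> Y \<and> c \<in> X)" using edge_sides[OF g XY assms(5)] .
        moreover have "(c \<in> X \<and> d \<in> Y) \<or> (c \<in> Y \<and> d \<in> X)" using edge_sides[OF g XY assms(2)] .
        ultimately have "{w,d} \<subseteq> X \<or> {w,d} \<subseteq> Y" using XY(2) by blast
        thus False using wd XY(3,4) unfolding independent_def by blast
      qed
      show False using twoK2[OF assms(1) aw assms(2) assms(3) cw assms(6) wd] .
    qed
  qed
  have dn: "d \<in> nbhd E c" "d \<notin> nbhd E a" using assms unfolding nbhd_def by auto
  have fin: "finite (nbhd E c)"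
  proof (rule finite_subset)
    show "nbhd E c \<subseteq> V" using g unfolding graph_def nbhd_def by blast
    show "finite V" using g unfolding graph_def by blast
  qed
  have "nbhd E a \<subset> nbhd E c" using sub dn by blast
  thus ?thesis unfolding degree_def using psubset_card_mono fin by blast
qed

lemma core':
  assumes G: "chain_graph V E" and GF: "chain_graph V (E - F)" and FE: "F \<subseteq> E"
    and ab: "{a,b} \<in> E" and cd: "{c,d} \<in> E" and bc: "{b,c} \<in> F"
    and nad: "{a,d} \<notin> E" and nac: "{a,c} \<notin> E" and nbd: "{b,d} \<notin> E"
    and m1: "\<forall>f\<in>F. \<forall>w\<in>f. degree E b \<le> degree E w"
    and m2: "\<forall>w. {b, w} \<in> F \<longrightarrow> degree E c \<le> degree E w"
  shows False
proof -
  have ins: "\<And>p q. {p,q} = {q,p}" by (simp add: insert_commute)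
  have bcE: "{b,c} \<in> E" using bc FE by blast
  have "{a,b} \<in> F \<or> {c,d} \<in> F"
  proof (rule ccontr)
    assume "\<not> ?thesis"
    hence "{a,b} \<in> E - F" "{c,d} \<in> E - F" using ab cd by auto
    from twoK2[OF GF this] show False using nad nac nbd bc by blast
  qed
  thus False
  proof
    assume "{a,b} \<in> F"
    hence "{b,a} \<in> F" using ins by metis
    hence "degree E c \<le> degree E a" using m2 by blast
    moreover have "degree E a < degree E c" using nest_deg[OF G cd nad ab bcE nac] .
    ultimately show False by simp
  next
    assume "{c,d} \<in> F"
    hence "degree E b \<le> degree E d" using m1 by blast
    moreover have "degree E d < degree E b"
      using nest_deg[of V E b a d c] G ab cd bcE nad nbd ins by metis
    ultimately show False by simp
  qed
qed

lemma core:
  assumes G: "chain_graph V E" and GF: "chain_graph V (E - F)" and FE: "F \<subseteq> E"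
    and dm: "degree_minimal E F e"
    and ab: "{a,b} \<in> E" and cd: "{c,d} \<in> E" and bc: "{b,c} = e"
    and nad: "{a,d} \<notin> E" and nac: "{a,c} \<notin> E" and nbd: "{b,d} \<notin> E"
  shows False
proof -
  have ins: "\<And>p q. {p,q} = {q,p}" by (simp add: insert_commute)
  obtain u v where e: "e = {u,v}" and eF: "e \<in> F"
    and m1: "\<forall>f\<in>F. \<forall>w\<in>f. degree E u \<le> degree E w"
    and m2: "\<forall>w. {u, w} \<in> F \<longrightarrow> degree E v \<le> degree E w"
    using dm unfolding degree_minimal_def by blast
  have "(u = b \<and> v = c) \<or> (u = c \<and> v = b)" using bc e by (auto simp: doubleton_eq_iff)
  thus False
  proof
    assume "u = b \<and> v = c"
    thus False using core'[OF G GF FE ab cd _ nad nac nbd] m1 m2 bc eF by blast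
  next
    assume uv: "u = c \<and> v = b"
    have "{d,c} \<in> E" "{b,a} \<in> E" "{c,b} \<in> F" "{d,a} \<notin> E" "{d,b} \<notin> E" "{c,a} \<notin> E"
      using ab cd bc eF nad nbd nac ins by metis+
    thus False using core'[OF G GF FE, of d c b a] m1 m2 uv by blast
  qed
qed

theorem theorem4p9:
  fixes V :: "'a set" and E F :: "'a set set" and e :: "'a set"
  assumes "chain_graph V E"
    and "F \<subseteq> E"
    and "chain_graph V (E - F)"
    and "degree_minimal E F e"
  shows "chain_graph V (E - {e})"
proof -
  have ins: "\<And>p q. {p,q} = {q,p}" by (simp add: insert_commute)
  obtain X Y where g: "graph V E" and XY: "X \<union> Y = V" "X \<inter> Y = {}" "independent E X" "independent E Y"
    using assms(1) unfolding chain_graph_def by blast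
  have g': "graph V (E - {e})" using g unfolding graph_def by blast
  have XY': "independent (E - {e}) X" "independent (E - {e}) Y" using XY(3,4) unfolding independent_def by blast+
  have nest: "\<forall>x1\<in>X. \<forall>x2\<in>X. nbhd (E - {e}) x1 \<subseteq> nbhd (E - {e}) x2 \<or> nbhd (E - {e}) x2 \<subseteq> nbhd (E - {e}) x1"
  proof (intro ballI, rule ccontr)
    fix x1 x2 assume x: "x1 \<in> X" "x2 \<in> X"
      and nn: "\<not> (nbhd (E - {e}) x1 \<subseteq> nbhd (E - {e}) x2 \<or> nbhd (E - {e}) x2 \<subseteq> nbhd (E - {e}) x1)"
    then obtain y1 y2 where y1: "{x1,y1} \<in> E - {e}" "{x2,y1} \<notin> E - {e}"
      and y2: "{x2,y2} \<in> E - {e}" "{x1,y2} \<notin> E - {e}" unfolding nbhd_def by blast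
    have "y1 \<in> Y" using edge_sides[OF g XY, of x1 y1] y1 x XY(2) by blast
    moreover have "y2 \<in> Y" using edge_sides[OF g XY, of x2 y2] y2 x XY(2) by blast
    ultimately have nx: "{x1,x2} \<notin> E" and ny: "{y1,y2} \<notin> E" and ny': "{y2,y1} \<notin> E"
      using x XY(3,4) unfolding independent_def by auto
    have x12: "x1 \<noteq> x2" using y1 y2 by blast
    have d1: "x1 \<noteq> y1" "x1 \<noteq> y2" "x2 \<noteq> y1" "x2 \<noteq> y2" using x \<open>y1 \<in> Y\<close> \<open>y2 \<in> Y\<close> XY(2) by blast+
    have "{x1,y2} \<in> E \<or> {x2,y1} \<in> E"
    proof (rule ccontr)
      assume "\<not> ?thesis"
      hence "{x1,y2} \<notin> E" "{y1,x2} \<notin> E" using ins by metis+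
      thus False using twoK2[OF assms(1), of x1 y1 x2 y2] y1 y2 nx ny by blast
    qed
    thus False
    proof
      assume "{x1,y2} \<in> E"
      hence e: "{x1,y2} = e" using y2 by blast
      have "{x2,y1} \<noteq> e" using e x12 d1 by (auto simp: doubleton_eq_iff)
      hence "{x2,y1} \<notin> E" using y1 by blast
      hence "{x2,y1} \<notin> E" "{x2,x1} \<notin> E" "{y2,y1} \<notin> E" "{y2, x1} = e" using nx ny' e ins by metis+
      thus False using core[OF assms(1) assms(3) assms(2) assms(4), of x2 y2 x1 y1] y1 y2 by blast
    next
      assume "{x2,y1} \<in> E"
      hence e: "{x2,y1} = e" using y1 by blast
      have "{x1,y2} \<noteq> e" using e x12 d1 by (auto simp: doubleton_eq_iff)
      hence "{x1,y2} \<notin> E" using y2 by blast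
      hence "{x1,y2} \<notin> E" "{y1, x2} = e" using e ins by metis+
      thus False using core[OF assms(1) assms(3) assms(2) assms(4), of x1 y1 x2 y2] y1 y2 nx ny by blast
    qed
  qed
  show ?thesis unfolding chain_graph_def using g' XY(1,2) XY' nest by blast
qed

end
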